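(* Let $f\colon\mathbb R^d\to\mathbb R$ be bounded from below with $\underline f=\inf f$, let $\lambda,\sigma,\alpha>0$, and let $(\rho_t)_{t\ge0}$ be a solution of the Fokker–Planck equation, regular enough that the weak formulation may be tested against $x\mapsto x$ and $x\mapsto|x|^2$. Then \[ \frac{d}{dt}V(\rho_t)=-2\lambda V(\rho_t)+\frac{d\sigma^2}{2}\int|x-m_f[\rho_t]|^2d\rho_t\le-\Big(2\lambda-\frac{d\sigma^2e^{-\alpha\underline f}}{\|\omega_f^\alpha\|_{L^1(\rho_t)}}\Big)V(\rho_t). \]
   Context: $\omega_f^\alpha(x)=e^{-\alpha f(x)}$; for a probability measure $\mu$, $\|\omega_f^\alpha\|_{L^1(\mu)}=\int e^{-\alpha f}d\mu$ and $m_f[\mu]=\frac{1}{\|\omega_f^\alpha\|_{L^1(\mu)}}\int x\,\omega_f^\alpha d\mu$. $E(\mu)=\int x\,d\mu$ and $V(\mu)=\frac12\int|x-E(\mu)|^2d\mu$. The Fokker–Planck equation (weak form): for test functions $\varphi$, $\frac{d}{dt}\int\varphi\,d\rho_t=\int\big(\tfrac{\sigma^2}{2}|x-m_f[\rho_t]|^2\Delta\varphi-\lambda(x-m_f[\rho_t])\cdot\nabla\varphi\big)d\rho_t$. *)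

theory Defs
  imports "HOL-Probability.Probability"
begin

definition cbo_weight :: "real \<Rightarrow> ('a \<Rightarrow> real) \<Rightarrow> 'a \<Rightarrow> real" where
  "cbo_weight \<alpha> f x = exp (- \<alpha> * f x)"

definition cbo_wnorm :: "real \<Rightarrow> ('a \<Rightarrow> real) \<Rightarrow> 'a measure \<Rightarrow> real" where
  "cbo_wnorm \<alpha> f \<mu> = integral\<^sup>L \<mu> (cbo_weight \<alpha> f)"

definition cbo_m :: "real \<Rightarrow> ('a::euclidean_space \<Rightarrow> real) \<Rightarrow> 'a measure \<Rightarrow> 'a" where
  "cbo_m \<alpha> f \<mu> = (1 / cbo_wnorm \<alpha> f \<mu>) *\<^sub>R integral\<^sup>L \<mu> (\<lambda>x. cbo_weight \<alpha> f x *\<^sub>R x)"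

definition cbo_E :: "'a::euclidean_space measure \<Rightarrow> 'a" where
  "cbo_E \<mu> = integral\<^sup>L \<mu> (\<lambda>x. x)"

definition cbo_V :: "'a::euclidean_space measure \<Rightarrow> real" where
  "cbo_V \<mu> = 1/2 * integral\<^sup>L \<mu> (\<lambda>x. (norm (x - cbo_E \<mu>))\<^sup>2)"

end

theory Submission imports Defs begin

lemma bm_transfer:
  assumes "sets M = sets (borel::'a::euclidean_space measure)" "g \<in> borel_measurable borel"
  shows "(g::'a \<Rightarrow> 'b::topological_space) \<in> borel_measurable M"
  using assms measurable_cong_sets[OF assms(1) refl] by simp

lemma intb:
  fixes M :: "'a::euclidean_space measure" and g :: "'a \<Rightarrow> 'b::euclidean_space"
  assumes P: "prob_space M" and S: "sets M = sets borel" and I: "integrable M (\<lambda>x. (norm x)\<^sup>2)"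
    and g: "g \<in> borel_measurable borel" and b: "\<And>x. norm (g x) \<le> C * (1 + (norm x)\<^sup>2)"
  shows "integrable M g"
proof -
  interpret prob_space M by fact
  have 1: "integrable M (\<lambda>x. C * (1 + (norm x)\<^sup>2))" using I by auto
  have 2: "g \<in> borel_measurable M" using bm_transfer[OF S g] .
  have 3: "AE x in M. norm (g x) \<le> norm (C * (1 + (norm x)\<^sup>2))"
    using b by (auto intro!: AE_I2 order_trans[OF b])
  show ?thesis using Bochner_Integration.integrable_bound[OF 1 2 3] .
qed

lemma norm_le_1sq: "norm (x::'a::real_normed_vector) \<le> 1 + (norm x)\<^sup>2"
  by (smt (verit, best) norm_ge_zero power2_eq_square mult_le_cancel_left1 mult_nonneg_nonneg)


lemma sqbound: "(norm (x - (e::'a::real_normed_vector)))\<^sup>2 \<le> (2 + 2*(norm e)\<^sup>2) * (1 + (norm x)\<^sup>2)"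
proof -
  have "norm (x - e) \<le> norm x + norm e" by (rule norm_triangle_ineq4)
  hence "(norm (x - e))\<^sup>2 \<le> (norm x + norm e)\<^sup>2" by (simp add: power_mono)
  also have "\<dots> \<le> 2*(norm x)\<^sup>2 + 2*(norm e)\<^sup>2"
    by (smt (verit) sum_squares_bound zero_le_power2 power2_sum)
  also have "\<dots> \<le> (2 + 2*(norm e)\<^sup>2) * (1 + (norm x)\<^sup>2)"
    by (simp add: algebra_simps)
  finally show ?thesis .
qed

lemma amgm: "(s::real) > 0 \<Longrightarrow> a * b \<le> (a\<^sup>2 / s + s * b\<^sup>2) / 2"
proof -
  assume s: "s > 0"
  have "0 \<le> (a - s*b)\<^sup>2" by simp
  hence "2 * s * (a*b) \<le> a\<^sup>2 + s\<^sup>2*b\<^sup>2" by (simp add: power2_eq_square algebra_simps)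
  thus ?thesis using s by (simp add: field_simps power2_eq_square)
qed


lemma key:
  fixes M :: "'a::euclidean_space measure" and w :: "'a \<Rightarrow> real"
  assumes Pr: "prob_space M" and S: "sets M = sets borel" and I: "integrable M (\<lambda>x. (norm x)\<^sup>2)"
    and wm: "w \<in> borel_measurable borel" and wpos: "\<And>x. 0 < w x" and wK: "\<And>x. w x \<le> K"
  shows "0 < (LINT x|M. w x)"
    and "(LINT x|M. (norm (x - (1 / (LINT x|M. w x)) *\<^sub>R (LINT x|M. w x *\<^sub>R x)))\<^sup>2)
          \<le> K / (LINT x|M. w x) * (LINT x|M. (norm (x - (LINT x|M. x)))\<^sup>2)"
proof -
  interpret prob_space M by fact
  define W where "W = (LINT x|M. w x)"
  define Wx where "Wx = (LINT x|M. w x *\<^sub>R x)"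
  define E where "E = (LINT x|M. x)"
  define m where "m = (1 / W) *\<^sub>R Wx"
  define v where "v = m - E"
  define P where "P = (LINT x|M. (norm (x - E))\<^sup>2)"
  have K0: "K > 0" using wpos[of 0] wK[of 0] by linarith
  have iw: "integrable M w"
    by (rule intb[OF Pr S I wm, of K]) (use wpos wK K0 in \<open>auto simp: less_imp_le intro: order_trans[OF _ mult_left_mono[of 1]]\<close>)
  have ix: "integrable M (\<lambda>x. x)"
    by (rule intb[OF Pr S I _ , of _ 1]) (auto simp: norm_le_1sq)
  have iwx: "integrable M (\<lambda>x. w x *\<^sub>R x)"
  proof (rule intb[OF Pr S I _, of _ K])
    show "(\<lambda>x. w x *\<^sub>R x) \<in> borel_measurable borel" using wm by measurable
    fix x
    have "norm (w x *\<^sub>R x) = w x * norm x" using wpos[of x] by simp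
    also have "\<dots> \<le> K * (1 + (norm x)\<^sup>2)"
      using wK[of x] norm_le_1sq[of x] wpos[of x] K0 by (intro mult_mono) auto
    finally show "norm (w x *\<^sub>R x) \<le> K * (1 + (norm x)\<^sup>2)" .
  qed
  have iP: "integrable M (\<lambda>x. (norm (x - E))\<^sup>2)"
    by (rule intb[OF Pr S I _, of _ "2 + 2*(norm E)\<^sup>2"]) (auto simp: sqbound)
  have W0: "W > 0"
  proof -
    have "W \<ge> 0" unfolding W_def using wpos by (simp add: less_imp_le)
    moreover have "W \<noteq> 0"
    proof
      assume "W = 0"
      hence "AE x in M. w x = 0" unfolding W_def using integral_nonneg_eq_0_iff_AE[OF iw] wpos
        by (simp add: less_imp_le)
      hence "AE x in M. False" using wpos by (auto elim: AE_mp intro!: AE_I2 simp: less_le)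
      thus False by simp
    qed
    ultimately show ?thesis by simp
  qed
  thus "0 < (LINT x|M. w x)" by (simp add: W_def)
  have Wm: "W *\<^sub>R m = Wx" unfolding m_def using W0 by simp
  have ident: "W * (v \<bullet> v) = (LINT x|M. (w x - W) * ((x - E) \<bullet> v))"
  proof -
    have "(LINT x|M. (w x - W) * ((x - E) \<bullet> v))
        = (LINT x|M. (w x *\<^sub>R x) \<bullet> v - (E \<bullet> v) * w x - W * (x \<bullet> v) + W * (E \<bullet> v))"
      by (rule Bochner_Integration.integral_cong) (auto simp: algebra_simps inner_diff_left)
    also have "\<dots> = Wx \<bullet> v - (E \<bullet> v) * W - W * (E \<bullet> v) + W * (E \<bullet> v)"
    proof -
      have a: "integrable M (\<lambda>x. w x * (x \<bullet> v))" using integrable_inner_left[OF iwx, of v] by simp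
      have b: "(LINT x|M. w x * (x \<bullet> v)) = Wx \<bullet> v"
        using integral_inner_left[of v M "\<lambda>x. w x *\<^sub>R x"] iwx unfolding Wx_def by simp
      have c: "integrable M (\<lambda>x. x \<bullet> v)" using integrable_inner_left[OF ix, of v] by simp
      have d: "(LINT x|M. x \<bullet> v) = E \<bullet> v" using ix unfolding E_def by simp
      show ?thesis using a b c d iw prob_space unfolding W_def by simp
    qed
    also have "\<dots> = W * (v \<bullet> v)"
      using Wm unfolding v_def by (simp add: algebra_simps inner_diff_left inner_diff_right flip: Wm)
    finally show ?thesis by simp
  qed
  have P0: "P \<ge> 0" unfolding P_def by simp
  have iww: "integrable M (\<lambda>x. (w x - W)\<^sup>2)"
  proof (rule intb[OF Pr S I _, of _ "(K + W)\<^sup>2"])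
    show "(\<lambda>x. (w x - W)\<^sup>2) \<in> borel_measurable borel" using wm by measurable
    fix x
    have "\<bar>w x - W\<bar> \<le> K + W" using wpos[of x] wK[of x] W0 by linarith
    hence "(w x - W)\<^sup>2 \<le> (K + W)\<^sup>2" by (metis abs_ge_zero power2_abs power_mono)
    also have "\<dots> \<le> (K + W)\<^sup>2 * (1 + (norm x)\<^sup>2)" by (simp add: mult_le_cancel_left1)
    finally show "norm ((w x - W)\<^sup>2) \<le> (K + W)\<^sup>2 * (1 + (norm x)\<^sup>2)" by simp
  qed
  have wwb: "(LINT x|M. (w x - W)\<^sup>2) \<le> (K - W) * W"
  proof -
    have "(LINT x|M. (w x - W)\<^sup>2) \<le> (LINT x|M. K * w x - 2 * W * w x + W\<^sup>2)"
    proof (rule integral_mono')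
      show "integrable M (\<lambda>x. K * w x - 2 * W * w x + W\<^sup>2)" using iw by simp
      fix x
      have "w x * w x \<le> K * w x" using wpos[of x] wK[of x] by (simp add: mult_right_mono)
      moreover have "(w x - W)\<^sup>2 = w x * w x - 2 * W * w x + W\<^sup>2" by (simp add: power2_eq_square algebra_simps)
      ultimately show 1: "(w x - W)\<^sup>2 \<le> K * w x - 2 * W * w x + W\<^sup>2" by linarith
      show "0 \<le> K * w x - 2 * W * w x + W\<^sup>2" using 1 zero_le_power2[of "w x - W"] by linarith
    qed
    also have "\<dots> = (K - W) * W" using iw prob_space unfolding W_def
      by (simp add: power2_eq_square algebra_simps)
    finally show ?thesis .
  qed
  have vb: "W * (v \<bullet> v) \<le> (K - W) * P"
  proof (cases "P = 0")
    case True
    hence "AE x in M. (norm (x - E))\<^sup>2 = 0"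
      using integral_nonneg_eq_0_iff_AE[OF iP] unfolding P_def by simp
    hence "AE x in M. (w x - W) * ((x - E) \<bullet> v) = 0" by (rule AE_mp) (auto intro!: AE_I2)
    hence "(LINT x|M. (w x - W) * ((x - E) \<bullet> v)) = 0"
      by (rule integral_eq_zero_AE)
    thus ?thesis using ident True by (metis mult_zero_left mult_zero_right order_refl)
  next
    case False
    hence Pp: "P > 0" using P0 by simp
    have "W * (v \<bullet> v) \<le> (LINT x|M. (P/W) * (w x - W)\<^sup>2 / 2 + (W/P) * ((norm (x - E))\<^sup>2 * (v \<bullet> v)) / 2)"
      unfolding ident
    proof (rule integral_mono')
      show "integrable M (\<lambda>x. (P/W) * (w x - W)\<^sup>2 / 2 + (W/P) * ((norm (x - E))\<^sup>2 * (v \<bullet> v)) / 2)"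
        using iww iP by simp
      fix x
      have sP: "W / P > 0" using W0 Pp by simp
      have cs: "((x - E) \<bullet> v)\<^sup>2 \<le> (norm (x - E))\<^sup>2 * (v \<bullet> v)"
      proof -
        have "\<bar>(x - E) \<bullet> v\<bar> \<le> norm (x - E) * norm v" by (rule Cauchy_Schwarz_ineq2)
        hence "(\<bar>(x - E) \<bullet> v\<bar>)\<^sup>2 \<le> (norm (x - E) * norm v)\<^sup>2" using power_mono[OF _ abs_ge_zero, of _ _ 2] by blast
        thus ?thesis by (simp add: power_mult_distrib power2_norm_eq_inner)
      qed
      have "(w x - W) * ((x - E) \<bullet> v) \<le> ((w x - W)\<^sup>2 / (W/P) + (W/P) * ((x - E) \<bullet> v)\<^sup>2) / 2"
        by (rule amgm[OF sP])
      also have "\<dots> \<le> ((w x - W)\<^sup>2 / (W/P) + (W/P) * ((norm (x - E))\<^sup>2 * (v \<bullet> v))) / 2"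
        using mult_left_mono[OF cs less_imp_le[OF sP]] by (intro divide_right_mono add_left_mono) simp_all
      also have "\<dots> = (P/W) * (w x - W)\<^sup>2 / 2 + (W/P) * ((norm (x - E))\<^sup>2 * (v \<bullet> v)) / 2"
        by (simp add: field_simps)
      finally show "(w x - W) * ((x - E) \<bullet> v) \<le> \<dots>" .
      show "0 \<le> (P/W) * (w x - W)\<^sup>2 / 2 + (W/P) * ((norm (x - E))\<^sup>2 * (v \<bullet> v)) / 2"
        using W0 Pp by (intro add_nonneg_nonneg) auto
    qed
    also have "\<dots> = (P/W) * (LINT x|M. (w x - W)\<^sup>2) / 2 + (W/P) * (P * (v \<bullet> v)) / 2"
      using iww iP unfolding P_def by simp
    also have "\<dots> \<le> (P/W) * ((K - W) * W) / 2 + (W/P) * (P * (v \<bullet> v)) / 2"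
      using wwb W0 Pp by (intro add_right_mono divide_right_mono mult_left_mono) auto
    also have "\<dots> = ((K - W) * P + W * (v \<bullet> v)) / 2" using W0 Pp by (simp add: field_simps)
    finally show ?thesis by simp
  qed
  have split: "(LINT x|M. (norm (x - m))\<^sup>2) = P + v \<bullet> v"
  proof -
    have "(LINT x|M. (norm (x - m))\<^sup>2) = (LINT x|M. (norm (x - E))\<^sup>2 - 2 * (x \<bullet> v) + 2 * (E \<bullet> v) + v \<bullet> v)"
      by (rule Bochner_Integration.integral_cong)
         (auto simp: v_def power2_norm_eq_inner algebra_simps inner_diff_left inner_diff_right inner_commute)
    also have "\<dots> = P - 2 * (E \<bullet> v) + 2 * (E \<bullet> v) + v \<bullet> v"
    proof -
      have c: "integrable M (\<lambda>x. x \<bullet> v)" using integrable_inner_left[OF ix, of v] by simp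
      have d: "(LINT x|M. x \<bullet> v) = E \<bullet> v" using ix unfolding E_def by simp
      show ?thesis using c d iP prob_space unfolding P_def by simp
    qed
    finally show ?thesis by simp
  qed
  have "(LINT x|M. (norm (x - m))\<^sup>2) \<le> K / W * P"
  proof -
    have "v \<bullet> v \<le> (K - W) / W * P" using vb W0 by (simp add: field_simps)
    hence "P + v \<bullet> v \<le> P + (K - W) / W * P" by simp
    also have "\<dots> = K / W * P" using W0 by (simp add: field_simps)
    finally show ?thesis using split by simp
  qed
  thus "(LINT x|M. (norm (x - (1 / (LINT x|M. w x)) *\<^sub>R (LINT x|M. w x *\<^sub>R x)))\<^sup>2)
          \<le> K / (LINT x|M. w x) * (LINT x|M. (norm (x - (LINT x|M. x)))\<^sup>2)"
    unfolding m_def W_def Wx_def P_def E_def .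
qed


lemma varform:
  fixes M :: "'a::euclidean_space measure"
  assumes Pr: "prob_space M" and S: "sets M = sets borel" and I: "integrable M (\<lambda>x. (norm x)\<^sup>2)"
  shows "cbo_V M = 1/2 * ((LINT x|M. (norm x)\<^sup>2) - cbo_E M \<bullet> cbo_E M)"
proof -
  interpret prob_space M by fact
  define E where "E = cbo_E M"
  have ix: "integrable M (\<lambda>x. x)"
    by (rule intb[OF Pr S I _ , of _ 1]) (auto simp: norm_le_1sq)
  have c: "integrable M (\<lambda>x. x \<bullet> E)" using integrable_inner_left[OF ix, of E] by simp
  have d: "(LINT x|M. x \<bullet> E) = E \<bullet> E" using ix unfolding E_def cbo_E_def by simp
  have "(LINT x|M. (norm (x - E))\<^sup>2) = (LINT x|M. (norm x)\<^sup>2 - 2 * (x \<bullet> E) + E \<bullet> E)"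
    by (rule Bochner_Integration.integral_cong)
       (auto simp: power2_norm_eq_inner algebra_simps inner_diff_left inner_diff_right inner_commute)
  also have "\<dots> = (LINT x|M. (norm x)\<^sup>2) - E \<bullet> E"
    using c d I prob_space by simp
  finally show ?thesis unfolding cbo_V_def E_def by simp
qed

theorem mainTheorem8:
  fixes f :: "'a::euclidean_space \<Rightarrow> real"
    and \<rho> :: "real \<Rightarrow> 'a measure"
    and lam \<sigma> \<alpha> :: real
  assumes f_meas: "f \<in> borel_measurable borel"
    and f_bdd: "bdd_below (range f)"
    and lam_pos: "lam > 0" and sigma_pos: "\<sigma> > 0" and alpha_pos: "\<alpha> > 0"
    and prob: "\<And>t. t \<ge> 0 \<Longrightarrow> prob_space (\<rho> t) \<and> sets (\<rho> t) = sets borel"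
    and moment2: "\<And>t. t \<ge> 0 \<Longrightarrow> integrable (\<rho> t) (\<lambda>x. (norm x)\<^sup>2)"
    and FP_x: "\<And>t. t \<ge> 0 \<Longrightarrow>
      ((\<lambda>s. integral\<^sup>L (\<rho> s) (\<lambda>x. x)) has_vector_derivative
         integral\<^sup>L (\<rho> t) (\<lambda>x. - lam *\<^sub>R (x - cbo_m \<alpha> f (\<rho> t)))) (at t within {0..})"
    and FP_sq: "\<And>t. t \<ge> 0 \<Longrightarrow>
      ((\<lambda>s. integral\<^sup>L (\<rho> s) (\<lambda>x. (norm x)\<^sup>2)) has_real_derivative
         integral\<^sup>L (\<rho> t) (\<lambda>x. \<sigma>\<^sup>2 / 2 * (norm (x - cbo_m \<alpha> f (\<rho> t)))\<^sup>2 * (2 * real DIM('a))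
                              - lam * ((x - cbo_m \<alpha> f (\<rho> t)) \<bullet> (2 *\<^sub>R x)))) (at t within {0..})"
  shows "\<And>t. t \<ge> 0 \<Longrightarrow>
      ((\<lambda>s. cbo_V (\<rho> s)) has_real_derivative
         (- 2 * lam * cbo_V (\<rho> t)
          + real DIM('a) * \<sigma>\<^sup>2 / 2 * integral\<^sup>L (\<rho> t) (\<lambda>x. (norm (x - cbo_m \<alpha> f (\<rho> t)))\<^sup>2)))
        (at t within {0..})
      \<and> - 2 * lam * cbo_V (\<rho> t)
          + real DIM('a) * \<sigma>\<^sup>2 / 2 * integral\<^sup>L (\<rho> t) (\<lambda>x. (norm (x - cbo_m \<alpha> f (\<rho> t)))\<^sup>2)
        \<le> - (2 * lam - real DIM('a) * \<sigma>\<^sup>2 * exp (- \<alpha> * (INF x. f x)) / cbo_wnorm \<alpha> f (\<rho> t))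
             * cbo_V (\<rho> t)"
proof -
  fix t :: real assume t0: "t \<ge> 0"
  define M where "M = \<rho> t"
  have Pr: "prob_space M" and S: "sets M = sets borel" using prob[OF t0] unfolding M_def by auto
  have I: "integrable M (\<lambda>x. (norm x)\<^sup>2)" using moment2[OF t0] unfolding M_def .
  interpret prob_space M by fact
  define m where "m = cbo_m \<alpha> f M"
  define E where "E = cbo_E M"
  define Q where "Q = (LINT x|M. (norm (x - m))\<^sup>2)"
  define Sq where "Sq = (LINT x|M. (norm x)\<^sup>2)"
  have ix: "integrable M (\<lambda>x. x)"
    by (rule intb[OF Pr S I _ , of _ 1]) (auto simp: norm_le_1sq)
  have iQ: "integrable M (\<lambda>x. (norm (x - m))\<^sup>2)"
    by (rule intb[OF Pr S I _, of _ "2 + 2*(norm m)\<^sup>2"]) (auto simp: sqbound)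
  have c: "integrable M (\<lambda>x. x \<bullet> m)" using integrable_inner_left[OF ix, of m] by simp
  have d: "(LINT x|M. x \<bullet> m) = E \<bullet> m" using ix unfolding E_def cbo_E_def by simp
  have V: "cbo_V M = 1/2 * (Sq - E \<bullet> E)" using varform[OF Pr S I] unfolding Sq_def E_def .
  define DS where "DS = integral\<^sup>L (\<rho> t) (\<lambda>x. \<sigma>\<^sup>2 / 2 * (norm (x - cbo_m \<alpha> f (\<rho> t)))\<^sup>2 * (2 * real DIM('a))
                              - lam * ((x - cbo_m \<alpha> f (\<rho> t)) \<bullet> (2 *\<^sub>R x)))"
  define DE where "DE = integral\<^sup>L (\<rho> t) (\<lambda>x. - lam *\<^sub>R (x - cbo_m \<alpha> f (\<rho> t)))"
  have DSv: "DS = \<sigma>\<^sup>2 * real DIM('a) * Q - 2 * lam * Sq + 2 * lam * (E \<bullet> m)"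
  proof -
    have "DS = (LINT x|M. (\<sigma>\<^sup>2 * real DIM('a)) * (norm (x - m))\<^sup>2 - (2 * lam) * (norm x)\<^sup>2 + (2 * lam) * (x \<bullet> m))"
      unfolding DS_def M_def[symmetric] m_def[symmetric]
      by (rule Bochner_Integration.integral_cong)
         (auto simp: power2_norm_eq_inner algebra_simps inner_diff_left inner_diff_right inner_commute)
    also have "\<dots> = \<sigma>\<^sup>2 * real DIM('a) * Q - 2 * lam * Sq + 2 * lam * (E \<bullet> m)"
      using iQ I c d unfolding Q_def Sq_def by simp
    finally show ?thesis .
  qed
  have DEv: "DE = - lam *\<^sub>R (E - m)"
    unfolding DE_def M_def[symmetric] m_def[symmetric] E_def cbo_E_def using ix prob_space
    by (simp add: scaleR_diff_right)
  have dS: "((\<lambda>s. integral\<^sup>L (\<rho> s) (\<lambda>x. (norm x)\<^sup>2)) has_real_derivative DS) (at t within {0..})"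
    using FP_sq[OF t0] unfolding DS_def .
  have dE: "((\<lambda>s. cbo_E (\<rho> s)) has_vector_derivative DE) (at t within {0..})"
    using FP_x[OF t0] unfolding DE_def cbo_E_def .
  have dEE: "((\<lambda>s. cbo_E (\<rho> s) \<bullet> cbo_E (\<rho> s)) has_real_derivative 2 * (E \<bullet> DE)) (at t within {0..})"
  proof -
    have "((\<lambda>s. cbo_E (\<rho> s) \<bullet> cbo_E (\<rho> s)) has_derivative
          (\<lambda>h. cbo_E (\<rho> t) \<bullet> (h *\<^sub>R DE) + (h *\<^sub>R DE) \<bullet> cbo_E (\<rho> t))) (at t within {0..})"
      using dE unfolding has_vector_derivative_def by (intro has_derivative_inner) auto
    moreover have "(\<lambda>h. cbo_E (\<rho> t) \<bullet> (h *\<^sub>R DE) + (h *\<^sub>R DE) \<bullet> cbo_E (\<rho> t)) = (*) (2 * (E \<bullet> DE))"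
      unfolding E_def M_def by (auto simp: inner_commute algebra_simps)
    ultimately show ?thesis unfolding has_field_derivative_def by simp
  qed
  have dg: "((\<lambda>s. 1/2 * (integral\<^sup>L (\<rho> s) (\<lambda>x. (norm x)\<^sup>2) - cbo_E (\<rho> s) \<bullet> cbo_E (\<rho> s)))
        has_real_derivative 1/2 * (DS - 2 * (E \<bullet> DE))) (at t within {0..})"
    by (intro DERIV_cmult DERIV_diff dS dEE)
  have dV: "((\<lambda>s. cbo_V (\<rho> s)) has_real_derivative 1/2 * (DS - 2 * (E \<bullet> DE))) (at t within {0..})"
  proof (rule has_field_derivative_transform_within[OF dg zero_less_one])
    show "t \<in> {0..}" using t0 by simp
    fix s :: real assume "s \<in> {0..}"
    hence s0: "s \<ge> 0" by simp
    show "1/2 * (integral\<^sup>L (\<rho> s) (\<lambda>x. (norm x)\<^sup>2) - cbo_E (\<rho> s) \<bullet> cbo_E (\<rho> s)) = cbo_V (\<rho> s)"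
      using varform[of "\<rho> s"] prob[OF s0] moment2[OF s0] by simp
  qed
  have eqD: "1/2 * (DS - 2 * (E \<bullet> DE)) = - 2 * lam * cbo_V M + real DIM('a) * \<sigma>\<^sup>2 / 2 * Q"
    unfolding DSv DEv V by (simp add: algebra_simps inner_diff_right inner_commute) (simp add: field_simps)
  define w where "w = cbo_weight \<alpha> f"
  define K where "K = exp (- \<alpha> * (INF x. f x))"
  have wm: "w \<in> borel_measurable borel" unfolding w_def cbo_weight_def using f_meas by measurable
  have wpos: "\<And>x. 0 < w x" unfolding w_def cbo_weight_def by simp
  have wK: "\<And>x. w x \<le> K"
  proof -
    fix x
    have "(INF x. f x) \<le> f x" using f_bdd by (rule cINF_lower) simp
    thus "w x \<le> K" unfolding w_def cbo_weight_def K_def using alpha_pos by simp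
  qed
  have kk: "Q \<le> K / cbo_wnorm \<alpha> f M * (LINT x|M. (norm (x - E))\<^sup>2)"
    using key(2)[OF Pr S I wm wpos wK]
    unfolding Q_def m_def cbo_m_def cbo_wnorm_def w_def E_def cbo_E_def by simp
  have PV: "(LINT x|M. (norm (x - E))\<^sup>2) = 2 * cbo_V M" unfolding cbo_V_def E_def by simp
  have "real DIM('a) * \<sigma>\<^sup>2 / 2 * Q \<le> real DIM('a) * \<sigma>\<^sup>2 / 2 * (K / cbo_wnorm \<alpha> f M * (2 * cbo_V M))"
    using kk unfolding PV by (intro mult_left_mono) auto
  hence ineq: "- 2 * lam * cbo_V M + real DIM('a) * \<sigma>\<^sup>2 / 2 * Q
     \<le> - (2 * lam - real DIM('a) * \<sigma>\<^sup>2 * K / cbo_wnorm \<alpha> f M) * cbo_V M"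
    by (simp add: algebra_simps)
  show "((\<lambda>s. cbo_V (\<rho> s)) has_real_derivative
         (- 2 * lam * cbo_V (\<rho> t)
          + real DIM('a) * \<sigma>\<^sup>2 / 2 * integral\<^sup>L (\<rho> t) (\<lambda>x. (norm (x - cbo_m \<alpha> f (\<rho> t)))\<^sup>2)))
        (at t within {0..})
      \<and> - 2 * lam * cbo_V (\<rho> t)
          + real DIM('a) * \<sigma>\<^sup>2 / 2 * integral\<^sup>L (\<rho> t) (\<lambda>x. (norm (x - cbo_m \<alpha> f (\<rho> t)))\<^sup>2)
        \<le> - (2 * lam - real DIM('a) * \<sigma>\<^sup>2 * exp (- \<alpha> * (INF x. f x)) / cbo_wnorm \<alpha> f (\<rho> t))
             * cbo_V (\<rho> t)"
    using dV[unfolded eqD] ineq unfolding M_def Q_def m_def K_def by (rule conjI)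
qed

end
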